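(* Suppose that for some instance of the SEJR subfamily, Alg3 uses $O(o_3)$ arithmetic operations. Then the instance can be computed using $O(nmk+o_3)$ arithmetic operations, when dissatisfaction levels are maintained as follows: initially $\ell(c,\emptyset)=\lfloor kn_c/n\rfloor$, and after each addition to $W$, for each $c\in C\setminus W$ the stored value is decremented by 1 while it exceeds $\lfloor\frac{k}{n}|\{i: c\in A_i,\ |A_i\cap W|<\text{(stored value)}\}|\rfloor$.
   Context: Setting: voters $N=\{1,\dots,n\}$, candidates $C=\{c_1,\dots,c_m\}$, approval ballots $A_i\subseteq C$, $k\le m$ a positive integer, $N_c=\{i: c\in A_i\}$, $n_c=|N_c|$. The profile is given as an $n\times m$ 0/1 table, and the counts $|A_i\cap W|$ are stored in an array of $n$ counters updated when a candidate is added; complexity counts arithmetic operations. Dissatisfaction level: for $W\subseteq C$ with $|W|\le k$ and $c\in C\setminus W$, $\ell(c,W)$ is the largest nonnegative integer $\ell$ with $\ell=\lfloor \frac{k}{n}|\{i\in N: c\in A_i,\ |A_i\cap W|<\ell\}|\rfloor$. SEJR subfamily (parametrized by a subprocedure Alg3): start with $W=\emptyset$. While $|W|<k$ and $\max_{c\in C\setminus W}\ell(c,W)>0$, add to $W$ a candidate $c\in C\setminus W$ maximizing $\ell(c,W)$ (ties broken arbitrarily). Afterwards, if $|W|<k$, Alg3 adds candidates from $C\setminus W$ until $|W|=k$. Output $W$. *)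

theory Defs
  imports Complex_Main
begin

text \<open>Voters are 0..<n, candidates 0..<m. The profile is the n x m 0/1 table
  A :: nat => nat => bool, where A i c means voter i approves candidate c.\<close>

definition ballot :: "(nat \<Rightarrow> nat \<Rightarrow> bool) \<Rightarrow> nat \<Rightarrow> nat \<Rightarrow> nat set" where
  "ballot A m i = {c. c < m \<and> A i c}"

definition unsat :: "(nat \<Rightarrow> nat \<Rightarrow> bool) \<Rightarrow> nat \<Rightarrow> nat \<Rightarrow> nat set \<Rightarrow> nat \<Rightarrow> nat \<Rightarrow> nat set" where
  "unsat A n m W c l = {i. i < n \<and> A i c \<and> card (ballot A m i \<inter> W) < l}"

definition ell :: "(nat \<Rightarrow> nat \<Rightarrow> bool) \<Rightarrow> nat \<Rightarrow> nat \<Rightarrow> nat \<Rightarrow> nat set \<Rightarrow> nat \<Rightarrow> nat" where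
  "ell A n m k W c = (GREATEST l. int l = \<lfloor>real k / real n * real (card (unsat A n m W c l))\<rfloor>)"

text \<open>First phase: the greedy loop, with arbitrary tie-breaking (nondeterministic).
  sejr_phase1 A n m k W W' : starting from W the loop may terminate with W'.\<close>
inductive sejr_phase1 :: "(nat \<Rightarrow> nat \<Rightarrow> bool) \<Rightarrow> nat \<Rightarrow> nat \<Rightarrow> nat \<Rightarrow> nat set \<Rightarrow> nat set \<Rightarrow> bool"
  for A n m k where
  stop: "\<not> (card W < k \<and> (\<exists>c\<in>{..<m} - W. ell A n m k W c > 0)) \<Longrightarrow> sejr_phase1 A n m k W W"
| step: "card W < k \<Longrightarrow> c \<in> {..<m} - W \<Longrightarrow> ell A n m k W c > 0 \<Longrightarrow>
         (\<forall>d\<in>{..<m} - W. ell A n m k W d \<le> ell A n m k W c) \<Longrightarrow>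
         sejr_phase1 A n m k (insert c W) W' \<Longrightarrow> sejr_phase1 A n m k W W'"

text \<open>Alg3 is a subprocedure: given the profile, n, m, k and the current W (with |W| < k)
  it returns the list of candidates it adds, together with its number of arithmetic operations.\<close>
type_synonym alg3_t = "(nat \<Rightarrow> nat \<Rightarrow> bool) \<Rightarrow> nat \<Rightarrow> nat \<Rightarrow> nat \<Rightarrow> nat set \<Rightarrow> nat list \<times> nat"

definition sejr_outcome :: "(nat \<Rightarrow> nat \<Rightarrow> bool) \<Rightarrow> nat \<Rightarrow> nat \<Rightarrow> nat \<Rightarrow> alg3_t \<Rightarrow> nat set \<Rightarrow> bool" where
  "sejr_outcome A n m k alg3 Wout \<longleftrightarrow>
     (\<exists>W. sejr_phase1 A n m k {} W \<and>
          Wout = (if card W < k then W \<union> set (fst (alg3 A n m k W)) else W))"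

section \<open>Cost-instrumented implementation (each function returns (result, #operations))\<close>

fun cnt_below :: "(nat \<Rightarrow> nat \<Rightarrow> bool) \<Rightarrow> (nat \<Rightarrow> nat) \<Rightarrow> nat \<Rightarrow> nat \<Rightarrow> nat list \<Rightarrow> nat \<times> nat" where
  "cnt_below A cnt c l [] = (0, 0)"
| "cnt_below A cnt c l (i # is) =
     (let (r, t) = cnt_below A cnt c l is in ((if A i c \<and> cnt i < l then r + 1 else r), t + 1))"

text \<open>Decrement the stored value v while v > floor(k/n * |{i : c in A_i, cnt i < v}|).
  Each test costs the scan (n operations) plus 2 (floor computation, comparison);
  each decrement costs 1.\<close>
fun decr :: "(nat \<Rightarrow> nat \<Rightarrow> bool) \<Rightarrow> nat \<Rightarrow> nat \<Rightarrow> (nat \<Rightarrow> nat) \<Rightarrow> nat \<Rightarrow> nat \<Rightarrow> nat \<times> nat" where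
  "decr A n k cnt c 0 = (0, n + 2)"
| "decr A n k cnt c (Suc v) =
     (let (s, t) = cnt_below A cnt c (Suc v) [0..<n] in
      if Suc v > k * s div n
      then (let (r, t') = decr A n k cnt c v in (r, t + 3 + t'))
      else (Suc v, t + 2))"

text \<open>Select a candidate outside W with maximal positive stored value (smallest index on ties);
  returns (candidate, value, cost); value 0 means no candidate with positive value.\<close>
fun sel :: "(nat \<Rightarrow> nat) \<Rightarrow> nat set \<Rightarrow> nat list \<Rightarrow> nat \<times> nat \<times> nat" where
  "sel lev W [] = (0, 0, 0)"
| "sel lev W (c # cs) =
     (let (b, v, t) = sel lev W cs in
      if c \<notin> W \<and> lev c \<ge> v \<and> lev c > 0 then (c, lev c, t + 1) else (b, v, t + 1))"

fun upd_levels :: "(nat \<Rightarrow> nat \<Rightarrow> bool) \<Rightarrow> nat \<Rightarrow> nat \<Rightarrow> (nat \<Rightarrow> nat) \<Rightarrow> nat set \<Rightarrow> (nat \<Rightarrow> nat)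
                    \<Rightarrow> nat list \<Rightarrow> (nat \<Rightarrow> nat) \<times> nat" where
  "upd_levels A n k cnt W lev [] = (lev, 0)"
| "upd_levels A n k cnt W lev (c # cs) =
     (let (lev', t) = upd_levels A n k cnt W lev cs in
      if c \<in> W then (lev', t + 1)
      else (let (r, t2) = decr A n k cnt c (lev' c) in (lev'(c := r), t + 1 + t2)))"

text \<open>Initial stored values floor(k n_c / n): n operations to count n_c, 2 for the floor.\<close>
fun init_levels :: "(nat \<Rightarrow> nat \<Rightarrow> bool) \<Rightarrow> nat \<Rightarrow> nat \<Rightarrow> nat list \<Rightarrow> (nat \<Rightarrow> nat) \<times> nat" where
  "init_levels A n k [] = ((\<lambda>_. 0), 0)"
| "init_levels A n k (c # cs) =
     (let (lev, t) = init_levels A n k cs;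
          (nc, t1) = cnt_below A (\<lambda>_. 0) c 1 [0..<n] in
      (lev(c := k * nc div n), t + t1 + 2))"

text \<open>The greedy loop. State: (W, |W|, counters |A_i \<inter> W|, stored values). The fuel argument
  (instantiated with k) only serves to make the recursion structural.\<close>
fun phase1 :: "(nat \<Rightarrow> nat \<Rightarrow> bool) \<Rightarrow> nat \<Rightarrow> nat \<Rightarrow> nat \<Rightarrow> nat
               \<Rightarrow> nat set \<times> nat \<times> (nat \<Rightarrow> nat) \<times> (nat \<Rightarrow> nat)
               \<Rightarrow> (nat set \<times> nat \<times> (nat \<Rightarrow> nat) \<times> (nat \<Rightarrow> nat)) \<times> nat" where
  "phase1 A n m k 0 st = (st, 1)"
| "phase1 A n m k (Suc f) (W, sz, cnt, lev) =
     (if sz \<ge> k then ((W, sz, cnt, lev), 1)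
      else (let (c, v, t1) = sel lev W [0..<m] in
            if v = 0 then ((W, sz, cnt, lev), t1 + 2)
            else (let W' = insert c W;
                      cnt' = (\<lambda>i. if i < n \<and> A i c then cnt i + 1 else cnt i);
                      (lev', t2) = upd_levels A n k cnt' W' lev [0..<m];
                      (st', t3) = phase1 A n m k f (W', sz + 1, cnt', lev')
                  in (st', t1 + 2 + n + t2 + t3))))"

definition sejr_fast :: "alg3_t \<Rightarrow> (nat \<Rightarrow> nat \<Rightarrow> bool) \<Rightarrow> nat \<Rightarrow> nat \<Rightarrow> nat \<Rightarrow> nat set \<times> nat" where
  "sejr_fast alg3 A n m k =
     (let (lev0, t0) = init_levels A n k [0..<m];
          ((W, sz, cnt, lev), t1) = phase1 A n m k k ({}, 0, (\<lambda>_. 0), lev0)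
      in if sz < k then (let (xs, t3) = alg3 A n m k W in (W \<union> set xs, t0 + n + t1 + 1 + t3))
         else (W, t0 + n + t1 + 1))"

end

theory Submission
  imports Defs
begin

lemma cnt_below_gen: "cnt_below A cnt c l xs = (length (filter (\<lambda>i. A i c \<and> cnt i < l) xs), length xs)"
  by (induction xs) (auto split: prod.splits)

lemma cnt_below_spec: "cnt_below A cnt c l [0..<n] = (card {i. i < n \<and> A i c \<and> cnt i < l}, n)"
proof -
  have "length (filter (\<lambda>i. A i c \<and> cnt i < l) [0..<n]) = card {i. i < n \<and> A i c \<and> cnt i < l}"
    by (subst distinct_length_filter) (auto intro!: arg_cong[where f=card])
  then show ?thesis by (simp add: cnt_below_gen)
qed

definition FF :: "(nat \<Rightarrow> nat \<Rightarrow> bool) \<Rightarrow> nat \<Rightarrow> nat \<Rightarrow> (nat \<Rightarrow> nat) \<Rightarrow> nat \<Rightarrow> nat \<Rightarrow> nat" where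
  "FF A n k cnt c l = k * card {i. i < n \<and> A i c \<and> cnt i < l} div n"

lemma FF0: "FF A n k cnt c 0 = 0" by (simp add: FF_def)

lemma FF_mono: "a \<le> b \<Longrightarrow> FF A n k cnt c a \<le> FF A n k cnt c b"
  unfolding FF_def
  by (intro div_le_mono mult_le_mono2 card_mono) auto

lemma FF_le: "0 < n \<Longrightarrow> FF A n k cnt c l \<le> k"
proof -
  assume n: "0 < n"
  have "card {i. i < n \<and> A i c \<and> cnt i < l} \<le> card {..<n}" by (intro card_mono) auto
  then have "k * card {i. i < n \<and> A i c \<and> cnt i < l} div n \<le> k * n div n"
    by (intro div_le_mono mult_le_mono2) auto
  then show ?thesis using n by (simp add: FF_def)
qed

lemma FF_anti: "(\<And>i. i < n \<Longrightarrow> cnt i \<le> cnt' i) \<Longrightarrow> FF A n k cnt' c l \<le> FF A n k cnt c l"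
  unfolding FF_def
  by (intro div_le_mono mult_le_mono2 card_mono) (auto, meson le_less_trans)

lemma decr_spec:
  "decr A n k cnt c v = (r, t) \<Longrightarrow> FF A n k cnt c v \<le> v \<Longrightarrow> (\<forall>l. FF A n k cnt c l = l \<longrightarrow> l \<le> v) \<Longrightarrow>
   FF A n k cnt c r = r \<and> (\<forall>l. FF A n k cnt c l = l \<longrightarrow> l \<le> r) \<and> r \<le> v \<and> t = (v - r) * (n + 3) + n + 2"
proof (induction v arbitrary: r t)
  case 0
  then show ?case by (simp add: FF0)
next
  case (Suc v)
  have cb: "cnt_below A cnt c (Suc v) [0..<n] = (card {i. i < n \<and> A i c \<and> cnt i < Suc v}, n)"
    by (rule cnt_below_spec)
  show ?case
  proof (cases "Suc v > FF A n k cnt c (Suc v)")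
    case True
    then have gt: "Suc v > k * card {i. i < n \<and> A i c \<and> cnt i < Suc v} div n" by (simp add: FF_def)
    obtain r' t' where d: "decr A n k cnt c v = (r', t')" by fastforce
    have eq: "r = r' \<and> t = n + 3 + t'" using Suc.prems(1) gt d cb by simp
    have "FF A n k cnt c v \<le> FF A n k cnt c (Suc v)" by (rule FF_mono) simp
    then have a1: "FF A n k cnt c v \<le> v" using True by simp
    have a2: "\<forall>l. FF A n k cnt c l = l \<longrightarrow> l \<le> v" using Suc.prems(3) True
      by (metis le_SucE less_irrefl)
    from Suc.IH[OF d a1 a2] have ih: "FF A n k cnt c r' = r' \<and> (\<forall>l. FF A n k cnt c l = l \<longrightarrow> l \<le> r') \<and> r' \<le> v \<and> t' = (v - r') * (n + 3) + n + 2" .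
    then have "Suc v - r' = Suc (v - r')" by (simp add: Suc_diff_le)
    then show ?thesis using ih eq by simp
  next
    case False
    then have ngt: "\<not> Suc v > k * card {i. i < n \<and> A i c \<and> cnt i < Suc v} div n" by (simp add: FF_def)
    have eq: "r = Suc v \<and> t = n + 2" using Suc.prems(1) ngt cb by simp
    have "FF A n k cnt c (Suc v) = Suc v" using False Suc.prems(2) by simp
    then show ?thesis using eq Suc.prems(3) by simp
  qed
qed

definition cntrel :: "(nat \<Rightarrow> nat \<Rightarrow> bool) \<Rightarrow> nat \<Rightarrow> nat \<Rightarrow> nat set \<Rightarrow> (nat \<Rightarrow> nat) \<Rightarrow> bool" where
  "cntrel A n m W cnt \<longleftrightarrow> (\<forall>i<n. cnt i = card (ballot A m i \<inter> W))"

lemma floor_eq: "\<lfloor>real k / real n * real s\<rfloor> = int (k * s div n)"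
proof -
  have "real k / real n * real s = real (k * s) / real n" by simp
  then show ?thesis by (simp only: floor_divide_of_nat_eq)
qed

lemma ell_FF: "cntrel A n m W cnt \<Longrightarrow> ell A n m k W c = (GREATEST l. FF A n k cnt c l = l)"
proof -
  assume h: "cntrel A n m W cnt"
  have u: "\<And>l. unsat A n m W c l = {i. i < n \<and> A i c \<and> cnt i < l}"
    using h by (auto simp: unsat_def cntrel_def)
  show ?thesis unfolding ell_def u floor_eq FF_def of_nat_eq_iff by (rule arg_cong[where f=Greatest]) auto
qed

lemma FF_greatest:
  assumes "0 < n"
  shows "FF A n k cnt c (GREATEST l. FF A n k cnt c l = l) = (GREATEST l. FF A n k cnt c l = l)"
    and "FF A n k cnt c l = l \<Longrightarrow> l \<le> (GREATEST l. FF A n k cnt c l = l)"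
proof -
  have b: "\<forall>y. FF A n k cnt c y = y \<longrightarrow> y \<le> k" using FF_le[OF assms] by metis
  show "FF A n k cnt c (GREATEST l. FF A n k cnt c l = l) = (GREATEST l. FF A n k cnt c l = l)"
    by (rule GreatestI_nat[where k=0 and b=k]) (auto simp: FF0 b)
  show "FF A n k cnt c l = l \<Longrightarrow> l \<le> (GREATEST l. FF A n k cnt c l = l)"
    by (rule Greatest_le_nat[where b=k]) (auto simp: b)
qed

lemma ell_char:
  assumes "cntrel A n m W cnt" "0 < n"
  shows "FF A n k cnt c (ell A n m k W c) = ell A n m k W c"
    and "FF A n k cnt c l = l \<Longrightarrow> l \<le> ell A n m k W c"
  using FF_greatest[OF assms(2)] ell_FF[OF assms(1)] by auto

lemma ell_eqI:
  assumes "cntrel A n m W cnt" "0 < n" "FF A n k cnt c r = r" "\<forall>l. FF A n k cnt c l = l \<longrightarrow> l \<le> r"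
  shows "ell A n m k W c = r"
  using ell_char[OF assms(1,2)] assms(3,4) by (metis le_antisym)

lemma gfp_aux:
  assumes mono: "\<And>a b. a \<le> b \<Longrightarrow> F a \<le> F b" and bnd: "\<And>l. F l \<le> (K::nat)"
    and fp: "\<And>x. F x = x \<Longrightarrow> x \<le> r"
  shows "l \<le> F l \<Longrightarrow> l \<le> r"
proof (induction "K - l" arbitrary: l rule: less_induct)
  case less
  show ?case
  proof (cases "F l = l")
    case True then show ?thesis using fp by blast
  next
    case False
    then have lt: "l < F l" using less.prems by simp
    have "F l \<le> F (F l)" using mono less.prems by blast
    moreover have "K - F l < K - l" using lt bnd[of l] by simp
    ultimately have "F l \<le> r" using less.hyps by blast
    then show ?thesis using lt by simp
  qed
qed

lemma sel_spec:
  "sel lev W cs = (b, v, t) \<Longrightarrow> t = length cs \<and> (v = 0 \<longrightarrow> (\<forall>c\<in>set cs. c \<notin> W \<longrightarrow> lev c = 0))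
   \<and> (0 < v \<longrightarrow> b \<in> set cs \<and> b \<notin> W \<and> lev b = v \<and> (\<forall>c\<in>set cs. c \<notin> W \<longrightarrow> lev c \<le> v))"
proof (induction cs arbitrary: b v t)
  case Nil then show ?case by simp
next
  case (Cons c cs)
  obtain b0 v0 t0 where s: "sel lev W cs = (b0, v0, t0)" by (metis prod_cases3)
  note ih = Cons.IH[OF s]
  show ?case
  proof (cases "c \<notin> W \<and> lev c \<ge> v0 \<and> lev c > 0")
    case True
    then have e: "b = c" "v = lev c" "t = t0 + 1" using Cons.prems s by auto
    show ?thesis unfolding e using ih True by auto
  next
    case False
    then have e: "b = b0" "v = v0" "t = t0 + 1" using Cons.prems s by auto
    show ?thesis unfolding e using ih False by auto
  qed
qed

lemma upd_spec:
  "distinct cs \<Longrightarrow> upd_levels A n k cnt W lev cs = (lev', t) \<Longrightarrow>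
   (\<forall>c. lev' c = (if c \<in> set cs \<and> c \<notin> W then fst (decr A n k cnt c (lev c)) else lev c)) \<and>
   t = sum_list (map (\<lambda>c. if c \<in> W then 1 else 1 + snd (decr A n k cnt c (lev c))) cs)"
proof (induction cs arbitrary: lev' t)
  case Nil then show ?case by simp
next
  case (Cons c cs)
  obtain l0 t0 where s: "upd_levels A n k cnt W lev cs = (l0, t0)" by fastforce
  from Cons.prems(1) have dcs: "distinct cs" by simp
  note ih = Cons.IH[OF dcs s]
  show ?case
  proof (cases "c \<in> W")
    case True
    then have "lev' = l0 \<and> t = t0 + 1" using Cons.prems s by simp
    then show ?thesis using ih True by auto
  next
    case False
    obtain r t2 where d: "decr A n k cnt c (l0 c) = (r, t2)" by fastforce
    have "lev' = l0(c := r) \<and> t = t0 + 1 + t2" using Cons.prems s d False by simp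
    moreover have "l0 c = lev c" using ih Cons.prems by auto
    ultimately show ?thesis using ih False d by auto
  qed
qed

lemma init_spec:
  "init_levels A n k cs = (lev, t) \<Longrightarrow> (\<forall>c\<in>set cs. lev c = k * card {i. i < n \<and> A i c} div n) \<and> t = length cs * (n + 2)"
proof (induction cs arbitrary: lev t)
  case Nil then show ?case by simp
next
  case (Cons c cs)
  obtain l0 t0 where s: "init_levels A n k cs = (l0, t0)" by fastforce
  have cb: "cnt_below A (\<lambda>_. 0) c 1 [0..<n] = (card {i. i < n \<and> A i c}, n)"
    using cnt_below_spec[of A "\<lambda>_. 0" c 1 n] by simp
  have "lev = l0(c := k * card {i. i < n \<and> A i c} div n) \<and> t = t0 + n + 2"
    using Cons.prems s cb by simp
  then show ?case using Cons.IH[OF s] by auto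
qed

lemma cand_step:
  assumes n: "0 < n" and r1: "cntrel A n m W cnt" and r2: "cntrel A n m W' cnt'"
    and le: "\<And>i. i < n \<Longrightarrow> cnt i \<le> cnt' i"
    and d: "decr A n k cnt' c (ell A n m k W c) = (r, t)"
  shows "ell A n m k W' c = r \<and> t + (n + 3) * r = (n + 2) + (n + 3) * ell A n m k W c"
proof -
  let ?v = "ell A n m k W c"
  have fv: "FF A n k cnt c ?v = ?v" by (rule ell_char(1)[OF r1 n])
  have a1: "FF A n k cnt' c ?v \<le> ?v" using FF_anti[of n cnt cnt' A k c ?v] le fv by simp
  have a2: "\<forall>l. FF A n k cnt' c l = l \<longrightarrow> l \<le> ?v"
  proof (intro allI impI)
    fix l assume "FF A n k cnt' c l = l"
    then have "l \<le> FF A n k cnt c l" using FF_anti[of n cnt cnt' A k c l] le by simp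
    then show "l \<le> ?v"
      using gfp_aux[where F="FF A n k cnt c" and K=k and r="ell A n m k W c", OF FF_mono FF_le[OF n] ell_char(2)[OF r1 n]]
      by blast
  qed
  from decr_spec[OF d a1 a2] have s: "FF A n k cnt' c r = r" "\<forall>l. FF A n k cnt' c l = l \<longrightarrow> l \<le> r"
    "r \<le> ?v" "t = (?v - r) * (n + 3) + n + 2" by auto
  have "ell A n m k W' c = r" by (rule ell_eqI[OF r2 n s(1) s(2)])
  moreover have "t + (n + 3) * r = (n + 2) + (n + 3) * ?v"
  proof -
    have "(?v - r) * (n + 3) + (n + 3) * r = (n + 3) * ?v"
      using s(3) by (metis add.commute le_add_diff_inverse mult.commute distrib_left)
    then show ?thesis using s(4) by simp
  qed
  ultimately show ?thesis by simp
qed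

lemma round_step:
  assumes n: "0 < n" and r1: "cntrel A n m W cnt" and r2: "cntrel A n m W' cnt'"
    and le: "\<And>i. i < n \<Longrightarrow> cnt i \<le> cnt' i"
    and lev: "\<forall>c<m. c \<notin> W \<longrightarrow> lev c = ell A n m k W c"
    and sub: "W \<subseteq> W'"
    and u: "upd_levels A n k cnt' W' lev [0..<m] = (lev', t2)"
  shows "(\<forall>c<m. c \<notin> W' \<longrightarrow> lev' c = ell A n m k W' c) \<and>
         t2 + (n + 3) * (\<Sum>c<m. lev' c) \<le> m * (n + 3) + (n + 3) * (\<Sum>c<m. lev c)"
proof -
  define g where "g c = (if c \<in> W' then 1 else 1 + snd (decr A n k cnt' c (lev c)))" for c
  from upd_spec[OF _ u] have us: "\<forall>c. lev' c = (if c \<in> set [0..<m] \<and> c \<notin> W' then fst (decr A n k cnt' c (lev c)) else lev c)"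
    "t2 = sum_list (map g [0..<m])" by (auto simp: g_def[abs_def])
  have t2: "t2 = (\<Sum>c<m. g c)" using us(2) sum_set_upt_conv_sum_list_nat[of g 0 m]
    by (simp add: atLeast0LessThan)
  have pc: "\<forall>c<m. c \<notin> W' \<longrightarrow> lev' c = ell A n m k W' c \<and> g c + (n + 3) * lev' c = (n + 3) + (n + 3) * lev c"
  proof (intro allI impI)
    fix c assume c: "c < m" "c \<notin> W'"
    then have cw: "c \<notin> W" using sub by auto
    obtain r t where d: "decr A n k cnt' c (lev c) = (r, t)" by fastforce
    have lc: "lev c = ell A n m k W c" using lev c cw by auto
    from cand_step[OF n r1 r2 le d[unfolded lc]] have "ell A n m k W' c = r \<and> t + (n + 3) * r = (n + 2) + (n + 3) * lev c"
      using lc by simp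
    moreover have "lev' c = r" "g c = 1 + t" using us(1) c d by (auto simp: g_def)
    ultimately show "lev' c = ell A n m k W' c \<and> g c + (n + 3) * lev' c = (n + 3) + (n + 3) * lev c" by simp
  qed
  have pw: "g c + (n + 3) * lev' c \<le> (n + 3) + (n + 3) * lev c" if "c < m" for c
  proof (cases "c \<in> W'")
    case True then show ?thesis using us(1) by (simp add: g_def)
  next
    case False then have "g c + (n + 3) * lev' c = (n + 3) + (n + 3) * lev c" using pc that by blast
    then show ?thesis by simp
  qed
  have "t2 + (n + 3) * (\<Sum>c<m. lev' c) = (\<Sum>c<m. g c + (n + 3) * lev' c)"
    by (simp add: t2 sum.distrib sum_distrib_left)
  also have "\<dots> \<le> (\<Sum>c<m. (n + 3) + (n + 3) * lev c)" by (rule sum_mono) (simp add: pw)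
  also have "\<dots> = m * (n + 3) + (n + 3) * (\<Sum>c<m. lev c)" by (simp add: sum.distrib sum_distrib_left)
  finally show ?thesis using pc by simp
qed

lemma cntrel_insert:
  assumes "cntrel A n m W cnt" "b < m" "b \<notin> W" "finite W"
  shows "cntrel A n m (insert b W) (\<lambda>i. if i < n \<and> A i b then cnt i + 1 else cnt i)"
  unfolding cntrel_def
proof (intro allI impI)
  fix i assume i: "i < n"
  have fin: "finite (ballot A m i \<inter> W)" using assms(4) by simp
  show "(if i < n \<and> A i b then cnt i + 1 else cnt i) = card (ballot A m i \<inter> insert b W)"
  proof (cases "A i b")
    case True
    then have "ballot A m i \<inter> insert b W = insert b (ballot A m i \<inter> W)" using assms(2) by (auto simp: ballot_def)
    then show ?thesis using True i assms(1,3) fin by (simp add: cntrel_def)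
  next
    case False
    then have "ballot A m i \<inter> insert b W = ballot A m i \<inter> W" by (auto simp: ballot_def)
    then show ?thesis using False i assms(1) by (simp add: cntrel_def)
  qed
qed

definition inv :: "(nat \<Rightarrow> nat \<Rightarrow> bool) \<Rightarrow> nat \<Rightarrow> nat \<Rightarrow> nat \<Rightarrow> nat \<Rightarrow> nat set \<Rightarrow> nat \<Rightarrow> (nat \<Rightarrow> nat) \<Rightarrow> (nat \<Rightarrow> nat) \<Rightarrow> bool" where
  "inv A n m k f W sz cnt lev \<longleftrightarrow> W \<subseteq> {..<m} \<and> card W = sz \<and> sz + f = k \<and> cntrel A n m W cnt \<and>
     (\<forall>c<m. c \<notin> W \<longrightarrow> lev c = ell A n m k W c)"

lemma phase1_spec:
  assumes n: "0 < n"
  shows "inv A n m k f W sz cnt lev \<Longrightarrow> phase1 A n m k f (W, sz, cnt, lev) = ((W2, sz2, cnt2, lev2), t) \<Longrightarrow>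
    sejr_phase1 A n m k W W2 \<and> W2 \<subseteq> {..<m} \<and> card W2 = sz2 \<and>
    t \<le> f * (m + 2 + n + m * (n + 3)) + (n + 3) * (\<Sum>c<m. lev c) + m + 2"
proof (induction f arbitrary: W sz cnt lev t)
  case 0
  then have e: "W2 = W" "sz2 = sz" "t = 1" by auto
  have "card W = k" using 0 by (simp add: inv_def)
  then have "sejr_phase1 A n m k W W" by (intro sejr_phase1.stop) simp
  then show ?case using e 0 by (simp add: inv_def)
next
  case (Suc f)
  have I: "W \<subseteq> {..<m}" "card W = sz" "sz + Suc f = k" "cntrel A n m W cnt"
    "\<forall>c<m. c \<notin> W \<longrightarrow> lev c = ell A n m k W c" using Suc.prems(1) by (auto simp: inv_def)
  have finW: "finite W" using I(1) finite_subset by blast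
  have szk: "\<not> sz \<ge> k" using I(3) by simp
  obtain b v t1 where sl: "sel lev W [0..<m] = (b, v, t1)" by (metis prod_cases3)
  note ss = sel_spec[OF sl]
  show ?case
  proof (cases "v = 0")
    case True
    then have e: "W2 = W" "sz2 = sz" "t = t1 + 2" using Suc.prems(2) szk sl by auto
    have "\<forall>c\<in>{..<m} - W. ell A n m k W c = 0" using ss True I(5) by auto
    then have "sejr_phase1 A n m k W W" by (intro sejr_phase1.stop) auto
    then show ?thesis using e ss I by simp
  next
    case False
    have bm: "b < m" "b \<notin> W" "lev b = v" "\<forall>c<m. c \<notin> W \<longrightarrow> lev c \<le> v" using ss False by auto
    define W' where "W' = insert b W"
    define cnt' where "cnt' = (\<lambda>i. if i < n \<and> A i b then cnt i + 1 else cnt i)"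
    obtain lev'' t2 where u: "upd_levels A n k cnt' W' lev [0..<m] = (lev'', t2)" by fastforce
    obtain st' t3 where rc: "phase1 A n m k f (W', sz + 1, cnt', lev'') = (st', t3)" by fastforce
    have "phase1 A n m k (Suc f) (W, sz, cnt, lev) = (st', t1 + 2 + n + t2 + t3)"
      using szk sl False u rc by (simp add: W'_def cnt'_def Let_def)
    then have e: "st' = (W2, sz2, cnt2, lev2)" "t = t1 + 2 + n + t2 + t3" using Suc.prems(2) by auto
    have r2: "cntrel A n m W' cnt'" unfolding W'_def cnt'_def by (rule cntrel_insert[OF I(4) bm(1,2) finW])
    have rs: "(\<forall>c<m. c \<notin> W' \<longrightarrow> lev'' c = ell A n m k W' c) \<and>
         t2 + (n + 3) * (\<Sum>c<m. lev'' c) \<le> m * (n + 3) + (n + 3) * (\<Sum>c<m. lev c)"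
      by (rule round_step[OF n I(4) r2 _ I(5) _ u]) (auto simp: cnt'_def W'_def)
    have inv': "inv A n m k f W' (sz + 1) cnt' lev''"
      unfolding inv_def using rs r2 I bm finW by (auto simp: W'_def)
    from Suc.IH[OF inv' rc[unfolded e(1)]] have ih:
      "sejr_phase1 A n m k W' W2" "W2 \<subseteq> {..<m}" "card W2 = sz2"
      "t3 \<le> f * (m + 2 + n + m * (n + 3)) + (n + 3) * (\<Sum>c<m. lev'' c) + m + 2" by auto
    have "sejr_phase1 A n m k W W2"
    proof (rule sejr_phase1.step[where c=b])
      show "card W < k" using I by simp
      show "b \<in> {..<m} - W" using bm by simp
      show "0 < ell A n m k W b" using bm I(5) False by simp
      show "\<forall>d\<in>{..<m} - W. ell A n m k W d \<le> ell A n m k W b" using bm I(5) by auto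
      show "sejr_phase1 A n m k (insert b W) W2" using ih(1) by (simp add: W'_def)
    qed
    moreover have "t \<le> Suc f * (m + 2 + n + m * (n + 3)) + (n + 3) * (\<Sum>c<m. lev c) + m + 2"
      using e(2) ih(4) rs ss by simp
    ultimately show ?thesis using ih by simp
  qed
qed

lemma init_inv:
  assumes n: "0 < n" and L: "\<forall>c<m. lev0 c = k * card {i. i < n \<and> A i c} div n"
  shows "inv A n m k k {} 0 (\<lambda>_. 0) lev0" and "(\<Sum>c<m. lev0 c) \<le> m * k"
proof -
  have r: "cntrel A n m {} (\<lambda>_. 0)" by (simp add: cntrel_def)
  have lk: "lev0 c \<le> k" if "c < m" for c
  proof -
    have "card {i. i < n \<and> A i c} \<le> card {..<n}" by (intro card_mono) auto
    then have "k * card {i. i < n \<and> A i c} div n \<le> k * n div n" by (intro div_le_mono mult_le_mono2) auto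
    then show ?thesis using L that n by simp
  qed
  show "(\<Sum>c<m. lev0 c) \<le> m * k" using sum_mono[of "{..<m}" lev0 "\<lambda>_. k"] lk by simp
  have "lev0 c = ell A n m k {} c" if c: "c < m" for c
  proof -
    let ?r = "k * card {i. i < n \<and> A i c} div n"
    have F: "FF A n k (\<lambda>_. 0) c l = (if l = 0 then 0 else ?r)" for l by (simp add: FF_def)
    have "ell A n m k {} c = ?r" by (rule ell_eqI[OF r n]) (auto simp: F)
    then show ?thesis using L c by simp
  qed
  then show "inv A n m k k {} 0 (\<lambda>_. 0) lev0" using r by (simp add: inv_def)
qed

lemma arith_bound:
  fixes n m k :: nat
  assumes "0 < n" "0 < k" "k \<le> m" "t1 \<le> k * (m + 2 + n + m * (n + 3)) + (n + 3) * (m * k) + m + 2"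
  shows "m * (n + 2) + n + t1 + 1 \<le> 20 * (n * m * k)"
proof -
  have m: "0 < m" using assms by simp
  let ?N = "n * m * k"
  have b1: "m * n \<le> ?N" "m \<le> ?N" "n \<le> ?N" "1 \<le> ?N" "k * m \<le> ?N" "k \<le> ?N" "k * n \<le> ?N"
    using assms m by (simp_all add: Suc_le_eq)
  have "m * (n + 2) + n + t1 + 1 \<le> m * n + 2 * m + n + 1 + 7 * (k * m) + 2 * k + k * n + 2 * ?N + m + 2"
    using assms(4) by (simp add: algebra_simps)
  also have "\<dots> \<le> 20 * ?N" using b1 by linarith
  finally show ?thesis .
qed

theorem mainTheorem11:
  fixes alg3 :: alg3_t
    and o3 :: "(nat \<Rightarrow> nat \<Rightarrow> bool) \<Rightarrow> nat \<Rightarrow> nat \<Rightarrow> nat \<Rightarrow> nat"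
  assumes "\<exists>C3::nat. \<forall>A n m k W. 0 < n \<longrightarrow> 0 < k \<longrightarrow> k \<le> m \<longrightarrow> W \<subseteq> {..<m} \<longrightarrow> card W < k
             \<longrightarrow> snd (alg3 A n m k W) \<le> C3 * o3 A n m k"
  shows "\<exists>D::nat. \<forall>A n m k. 0 < n \<longrightarrow> 0 < k \<longrightarrow> k \<le> m \<longrightarrow>
           sejr_outcome A n m k alg3 (fst (sejr_fast alg3 A n m k)) \<and>
           snd (sejr_fast alg3 A n m k) \<le> D * (n * m * k + o3 A n m k)"
proof -
  obtain C3 where C3: "\<forall>A n m k W. 0 < n \<longrightarrow> 0 < k \<longrightarrow> k \<le> m \<longrightarrow> W \<subseteq> {..<m} \<longrightarrow> card W < k
             \<longrightarrow> snd (alg3 A n m k W) \<le> C3 * o3 A n m k" using assms by blast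
  have "\<forall>A n m k. 0 < n \<longrightarrow> 0 < k \<longrightarrow> k \<le> m \<longrightarrow>
           sejr_outcome A n m k alg3 (fst (sejr_fast alg3 A n m k)) \<and>
           snd (sejr_fast alg3 A n m k) \<le> (20 + C3) * (n * m * k + o3 A n m k)"
  proof (intro allI impI)
    fix A :: "nat \<Rightarrow> nat \<Rightarrow> bool" and n m k :: nat assume n: "0 < n" and k: "0 < k" and km: "k \<le> m"
    obtain lev0 t0 where il: "init_levels A n k [0..<m] = (lev0, t0)" by fastforce
    from init_spec[OF il] have L: "\<forall>c<m. lev0 c = k * card {i. i < n \<and> A i c} div n" and t0: "t0 = m * (n + 2)"
      by auto
    obtain W sz cnt lev t1 where p1: "phase1 A n m k k ({}, 0, \<lambda>_. 0, lev0) = ((W, sz, cnt, lev), t1)"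
      by (metis prod_cases4 prod.collapse)
    from phase1_spec[OF n init_inv(1)[OF n L] p1] init_inv(2)[OF n L]
    have P: "sejr_phase1 A n m k {} W" "W \<subseteq> {..<m}" "card W = sz"
      "t1 \<le> k * (m + 2 + n + m * (n + 3)) + (n + 3) * (m * k) + m + 2"
      by (auto intro: order.trans add_le_mono mult_le_mono2 simp: mult.commute[of m k])
    have ab: "t0 + n + t1 + 1 \<le> 20 * (n * m * k)" using arith_bound[OF n k km P(4)] t0 by simp
    show "sejr_outcome A n m k alg3 (fst (sejr_fast alg3 A n m k)) \<and>
           snd (sejr_fast alg3 A n m k) \<le> (20 + C3) * (n * m * k + o3 A n m k)"
    proof (cases "sz < k")
      case True
      obtain xs t3 where a3: "alg3 A n m k W = (xs, t3)" by fastforce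
      have t3: "t3 \<le> C3 * o3 A n m k" using C3 n k km P(2,3) True a3
        by (metis snd_conv)
      have sf: "sejr_fast alg3 A n m k = (W \<union> set xs, t0 + n + t1 + 1 + t3)"
        using il p1 True a3 by (simp add: sejr_fast_def)
      have "sejr_outcome A n m k alg3 (W \<union> set xs)"
        unfolding sejr_outcome_def using P True a3 by auto
      moreover have "t0 + n + t1 + 1 + t3 \<le> (20 + C3) * (n * m * k + o3 A n m k)"
        using ab t3 by (simp add: algebra_simps)
      ultimately show ?thesis using sf by simp
    next
      case False
      have sf: "sejr_fast alg3 A n m k = (W, t0 + n + t1 + 1)"
        using il p1 False by (simp add: sejr_fast_def)
      have "sejr_outcome A n m k alg3 W"
        unfolding sejr_outcome_def using P False by auto
      moreover have "t0 + n + t1 + 1 \<le> (20 + C3) * (n * m * k + o3 A n m k)"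
        using ab by (simp add: algebra_simps)
      ultimately show ?thesis using sf by simp
    qed
  qed
  then show ?thesis by blast
qed

end
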